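(* Let $k$ be a field and $S=k[x_1,\ldots,x_n]$. If $F\subset S$ is a robust set of polynomials and $0\le j\le n$, then $F\cap k[x_1,\ldots,x_j]$ is a robust set of polynomials in $k[x_1,\ldots,x_j]$.
   Context: A set $F$ of polynomials in a polynomial ring is robust if it is a Gröbner basis of the ideal $(F)$ with respect to every monomial term order and its elements minimally generate $(F)$. *)

theory Defs
  imports Main "HOL-Library.Poly_Mapping"
begin

text \<open>A monomial t (an exponent vector) stands for the product of x_i ^ (Poly_Mapping.lookup t i).\<close>

type_synonym monom = "nat \<Rightarrow>\<^sub>0 nat"
type_synonym 'a mpoly = "monom \<Rightarrow>\<^sub>0 'a"

definition monoms_in :: "nat \<Rightarrow> monom set" where
  "monoms_in n = {t. Poly_Mapping.keys t \<subseteq> {1..n}}"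

definition polys_in :: "nat \<Rightarrow> 'a::zero mpoly set" where
  "polys_in n = {p. Poly_Mapping.keys p \<subseteq> monoms_in n}"

inductive_set ideal_gen :: "nat \<Rightarrow> 'a::field mpoly set \<Rightarrow> 'a mpoly set"
  for n :: nat and F :: "'a mpoly set" where
  zero: "0 \<in> ideal_gen n F"
| gen: "f \<in> F \<Longrightarrow> f \<in> ideal_gen n F"
| add: "a \<in> ideal_gen n F \<Longrightarrow> b \<in> ideal_gen n F \<Longrightarrow> a + b \<in> ideal_gen n F"
| mult: "q \<in> polys_in n \<Longrightarrow> a \<in> ideal_gen n F \<Longrightarrow> q * a \<in> ideal_gen n F"

definition term_order :: "nat \<Rightarrow> (monom \<Rightarrow> monom \<Rightarrow> bool) \<Rightarrow> bool" where
  "term_order n le \<longleftrightarrow>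
     (\<forall>s\<in>monoms_in n. le s s) \<and>
     (\<forall>s\<in>monoms_in n. \<forall>t\<in>monoms_in n. \<forall>u\<in>monoms_in n. le s t \<longrightarrow> le t u \<longrightarrow> le s u) \<and>
     (\<forall>s\<in>monoms_in n. \<forall>t\<in>monoms_in n. le s t \<longrightarrow> le t s \<longrightarrow> s = t) \<and>
     (\<forall>s\<in>monoms_in n. \<forall>t\<in>monoms_in n. le s t \<or> le t s) \<and>
     (\<forall>t\<in>monoms_in n. le 0 t) \<and>
     (\<forall>s\<in>monoms_in n. \<forall>t\<in>monoms_in n. \<forall>u\<in>monoms_in n. le s t \<longrightarrow> le (s + u) (t + u))"

definition lead_monom :: "(monom \<Rightarrow> monom \<Rightarrow> bool) \<Rightarrow> 'a::zero mpoly \<Rightarrow> monom" where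
  "lead_monom le p = (THE t. t \<in> Poly_Mapping.keys p \<and> (\<forall>s\<in>Poly_Mapping.keys p. le s t))"

definition monom_dvd :: "monom \<Rightarrow> monom \<Rightarrow> bool" where
  "monom_dvd s t \<longleftrightarrow> (\<forall>i. Poly_Mapping.lookup s i \<le> Poly_Mapping.lookup t i)"

definition is_groebner :: "nat \<Rightarrow> (monom \<Rightarrow> monom \<Rightarrow> bool) \<Rightarrow> 'a::field mpoly set \<Rightarrow> bool" where
  "is_groebner n le G \<longleftrightarrow>
     (\<forall>p\<in>ideal_gen n G. p \<noteq> 0 \<longrightarrow>
        (\<exists>g\<in>G. g \<noteq> 0 \<and> monom_dvd (lead_monom le g) (lead_monom le p)))"

definition minimally_generates :: "nat \<Rightarrow> 'a::field mpoly set \<Rightarrow> bool" where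
  "minimally_generates n F \<longleftrightarrow> (\<forall>f\<in>F. ideal_gen n (F - {f}) \<noteq> ideal_gen n F)"

definition robust :: "nat \<Rightarrow> 'a::field mpoly set \<Rightarrow> bool" where
  "robust n F \<longleftrightarrow> F \<subseteq> polys_in n \<and>
     (\<forall>le. term_order n le \<longrightarrow> is_groebner n le F) \<and>
     minimally_generates n F"

end

theory Submission
  imports Defs
begin

definition lowp :: "nat \<Rightarrow> monom \<Rightarrow> monom" where
  "lowp j s = Abs_poly_mapping (\<lambda>i. if i \<le> j then Poly_Mapping.lookup s i else 0)"

lemma lookup_lowp: "Poly_Mapping.lookup (lowp j s) i = (if i \<le> j then Poly_Mapping.lookup s i else 0)"
proof -
  have "finite {i. (if i \<le> j then Poly_Mapping.lookup s i else 0) \<noteq> 0}"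
  proof (rule finite_subset[of _ "Poly_Mapping.keys s"])
    show "{i. (if i \<le> j then Poly_Mapping.lookup s i else 0) \<noteq> 0} \<subseteq> Poly_Mapping.keys s"
    proof
      fix i assume "i \<in> {i. (if i \<le> j then Poly_Mapping.lookup s i else 0) \<noteq> 0}"
      then have "Poly_Mapping.lookup s i \<noteq> 0" by (simp split: if_splits)
      then show "i \<in> Poly_Mapping.keys s" by (rule iffD1[OF lookup_not_eq_zero_eq_in_keys])
    qed
  qed simp
  then show ?thesis unfolding lowp_def by (simp add: Abs_poly_mapping_inverse)
qed

lemma lowp_add: "lowp j (s + t) = lowp j s + lowp j t"
  by (rule poly_mapping_eqI) (simp add: lookup_lowp lookup_add)

lemma lowp_zero: "lowp j 0 = 0"
  by (rule poly_mapping_eqI) (simp add: lookup_lowp)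

lemma monoms_in_iff: "s \<in> monoms_in n \<longleftrightarrow> (\<forall>i. (i = 0 \<or> i > n) \<longrightarrow> Poly_Mapping.lookup s i = 0)"
proof
  assume "s \<in> monoms_in n"
  then have "Poly_Mapping.keys s \<subseteq> {1..n}" by (simp add: monoms_in_def)
  then show "\<forall>i. (i = 0 \<or> i > n) \<longrightarrow> Poly_Mapping.lookup s i = 0"
  proof (intro allI impI)
    fix i assume "i = 0 \<or> i > n"
    then have "i \<notin> {1..n}" by auto
    with \<open>Poly_Mapping.keys s \<subseteq> {1..n}\<close> have "i \<notin> Poly_Mapping.keys s" by blast
    then show "Poly_Mapping.lookup s i = 0" by (rule iffD1[OF not_in_keys_iff_lookup_eq_zero])
  qed
next
  assume a: "\<forall>i. (i = 0 \<or> i > n) \<longrightarrow> Poly_Mapping.lookup s i = 0"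
  have "Poly_Mapping.keys s \<subseteq> {1..n}"
  proof
    fix i assume "i \<in> Poly_Mapping.keys s"
    then have "Poly_Mapping.lookup s i \<noteq> 0" by (rule iffD2[OF lookup_not_eq_zero_eq_in_keys])
    have "(i = 0 \<or> i > n) \<longrightarrow> Poly_Mapping.lookup s i = 0" using a by (rule spec)
    with \<open>Poly_Mapping.lookup s i \<noteq> 0\<close> have "\<not> (i = 0 \<or> i > n)" by iprover
    then show "i \<in> {1..n}" by auto
  qed
  then show "s \<in> monoms_in n" by (simp add: monoms_in_def)
qed

lemma lowp_in: "s \<in> monoms_in n \<Longrightarrow> lowp j s \<in> monoms_in j"
proof -
  assume "s \<in> monoms_in n"
  then have "Poly_Mapping.lookup s 0 = 0" unfolding monoms_in_iff by blast
  then show ?thesis unfolding monoms_in_iff lookup_lowp by auto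
qed

lemma lowp_id:
  assumes "s \<in> monoms_in j" shows "lowp j s = s"
proof (rule poly_mapping_eqI)
  fix i
  have h: "(i = 0 \<or> i > j) \<longrightarrow> Poly_Mapping.lookup s i = 0"
    using assms unfolding monoms_in_iff by (rule spec)
  show "Poly_Mapping.lookup (lowp j s) i = Poly_Mapping.lookup s i"
  proof (cases "i \<le> j")
    case True then show ?thesis by (simp add: lookup_lowp)
  next
    case False then have "i > j" by simp
    with h have "Poly_Mapping.lookup s i = 0" by iprover
    with False show ?thesis by (simp add: lookup_lowp)
  qed
qed

lemma monoms_in_add:
  assumes "s \<in> monoms_in n" "t \<in> monoms_in n" shows "s + t \<in> monoms_in n"
  unfolding monoms_in_iff
proof (intro allI impI)
  fix i assume i: "i = 0 \<or> i > n"
  have "Poly_Mapping.lookup s i = 0" using assms(1)[unfolded monoms_in_iff, rule_format, OF i] .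
  moreover have "Poly_Mapping.lookup t i = 0" using assms(2)[unfolded monoms_in_iff, rule_format, OF i] .
  ultimately show "Poly_Mapping.lookup (s + t) i = 0" by (simp add: lookup_add)
qed

lemma monoms_in_mono:
  assumes "j \<le> n" shows "monoms_in j \<subseteq> monoms_in n"
proof
  fix t assume "t \<in> monoms_in j"
  then have "Poly_Mapping.keys t \<subseteq> {1..j}" by (simp add: monoms_in_def)
  moreover have "{1..j} \<subseteq> {1..n}" using assms by simp
  ultimately have "Poly_Mapping.keys t \<subseteq> {1..n}" by (rule subset_trans)
  then show "t \<in> monoms_in n" by (simp add: monoms_in_def)
qed

lemma polys_in_mono:
  assumes "j \<le> n" shows "polys_in j \<subseteq> polys_in n"
proof
  fix p :: "'a mpoly" assume "p \<in> polys_in j"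
  then have "Poly_Mapping.keys p \<subseteq> monoms_in j" by (simp add: polys_in_def)
  then have "Poly_Mapping.keys p \<subseteq> monoms_in n" using monoms_in_mono[OF assms] by (rule subset_trans)
  then show "p \<in> polys_in n" by (simp add: polys_in_def)
qed

lemma polys_in_add:
  assumes "p \<in> polys_in n" "q \<in> polys_in n" shows "p + q \<in> polys_in n"
proof -
  have "Poly_Mapping.keys p \<union> Poly_Mapping.keys q \<subseteq> monoms_in n"
    using assms by (simp add: polys_in_def)
  with keys_add[of p q] have "Poly_Mapping.keys (p + q) \<subseteq> monoms_in n" by (rule subset_trans)
  then show ?thesis by (simp add: polys_in_def)
qed

lemma polys_in_mult:
  assumes "(p::'a::field mpoly) \<in> polys_in n" "q \<in> polys_in n" shows "p * q \<in> polys_in n"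
proof -
  have kp: "Poly_Mapping.keys p \<subseteq> monoms_in n" and kq: "Poly_Mapping.keys q \<subseteq> monoms_in n"
    using assms by (simp_all add: polys_in_def)
  have "{a + b | a b. a \<in> Poly_Mapping.keys p \<and> b \<in> Poly_Mapping.keys q} \<subseteq> monoms_in n"
  proof
    fix x assume "x \<in> {a + b | a b. a \<in> Poly_Mapping.keys p \<and> b \<in> Poly_Mapping.keys q}"
    then obtain a b where x: "x = a + b" and a: "a \<in> Poly_Mapping.keys p" and b: "b \<in> Poly_Mapping.keys q"
      unfolding mem_Collect_eq by iprover
    from a kp have "a \<in> monoms_in n" by (rule subsetD[rotated])
    moreover from b kq have "b \<in> monoms_in n" by (rule subsetD[rotated])
    ultimately show "x \<in> monoms_in n" unfolding x by (rule monoms_in_add)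
  qed
  with keys_mult[of p q] have "Poly_Mapping.keys (p * q) \<subseteq> monoms_in n" by (rule subset_trans)
  then show ?thesis by (simp add: polys_in_def)
qed

lemma polys_in_zero: "0 \<in> polys_in n"
  unfolding polys_in_def by simp

lemma ideal_gen_polys:
  assumes "F \<subseteq> polys_in n"
  shows "p \<in> ideal_gen n F \<Longrightarrow> p \<in> polys_in n"
proof (induction rule: ideal_gen.induct)
  case zero then show ?case by (rule polys_in_zero)
next
  case (gen f) then show ?case using assms by blast
next
  case (add a b) show ?case using add.IH by (rule polys_in_add)
next
  case (mult q a) show ?case using mult.hyps(1) mult.IH by (rule polys_in_mult)
qed

lemma ideal_gen_sub:
  assumes "j \<le> n" "\<forall>g\<in>F. g \<in> ideal_gen n G"
  shows "p \<in> ideal_gen j F \<Longrightarrow> p \<in> ideal_gen n G"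
proof (induction rule: ideal_gen.induct)
  case zero then show ?case by (rule ideal_gen.zero)
next
  case (gen f) then show ?case using assms by blast
next
  case (add a b) show ?case using add.IH by (rule ideal_gen.add)
next
  case (mult q a) then show ?case using polys_in_mono[OF assms(1)] ideal_gen.mult by blast
qed

definition Hj :: "nat \<Rightarrow> monom \<Rightarrow> monom \<Rightarrow> bool" where
  "Hj j s t \<longleftrightarrow> (\<forall>i>j. Poly_Mapping.lookup s i = Poly_Mapping.lookup t i)"
definition Lj :: "nat \<Rightarrow> monom \<Rightarrow> monom \<Rightarrow> bool" where
  "Lj j s t \<longleftrightarrow> (\<exists>i>j. Poly_Mapping.lookup s i < Poly_Mapping.lookup t i \<and>
     (\<forall>k. j < k \<longrightarrow> k < i \<longrightarrow> Poly_Mapping.lookup s k = Poly_Mapping.lookup t k))"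
definition elim :: "nat \<Rightarrow> (monom \<Rightarrow> monom \<Rightarrow> bool) \<Rightarrow> monom \<Rightarrow> monom \<Rightarrow> bool" where
  "elim j le s t \<longleftrightarrow> (Hj j s t \<and> le (lowp j s) (lowp j t)) \<or> Lj j s t"

lemma nonH: "\<not> Hj j s t \<Longrightarrow> Lj j s t \<or> Lj j t s"
proof -
  assume "\<not> Hj j s t"
  then obtain i0 where "i0 > j" "Poly_Mapping.lookup s i0 \<noteq> Poly_Mapping.lookup t i0" by (auto simp: Hj_def)
  define i where "i = (LEAST i. i > j \<and> Poly_Mapping.lookup s i \<noteq> Poly_Mapping.lookup t i)"
  have i: "i > j \<and> Poly_Mapping.lookup s i \<noteq> Poly_Mapping.lookup t i"
    unfolding i_def by (rule LeastI) (use \<open>i0 > j\<close> \<open>Poly_Mapping.lookup s i0 \<noteq> _\<close> in auto)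
  have below: "\<forall>k. j < k \<longrightarrow> k < i \<longrightarrow> Poly_Mapping.lookup s k = Poly_Mapping.lookup t k"
    unfolding i_def using not_less_Least by blast
  show ?thesis
  proof (cases "Poly_Mapping.lookup s i < Poly_Mapping.lookup t i")
    case True then show ?thesis using i below unfolding Lj_def by blast
  next
    case False then have "Poly_Mapping.lookup t i < Poly_Mapping.lookup s i" using i by simp
    then show ?thesis using i below unfolding Lj_def by force
  qed
qed

lemma L_not_H: "Lj j s t \<Longrightarrow> \<not> Hj j s t"
  unfolding Lj_def Hj_def by force

lemma L_H: "Lj j s t \<Longrightarrow> Hj j t u \<Longrightarrow> Lj j s u"
  unfolding Lj_def Hj_def by (metis order.strict_trans)
lemma H_L: "Hj j s t \<Longrightarrow> Lj j t u \<Longrightarrow> Lj j s u"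
  unfolding Lj_def Hj_def by (metis order.strict_trans)
lemma H_trans: "Hj j s t \<Longrightarrow> Hj j t u \<Longrightarrow> Hj j s u"
  unfolding Hj_def by simp
lemma L_trans: "Lj j s t \<Longrightarrow> Lj j t u \<Longrightarrow> Lj j s u"
proof -
  assume "Lj j s t" "Lj j t u"
  then obtain i1 i2 where a: "i1 > j" "Poly_Mapping.lookup s i1 < Poly_Mapping.lookup t i1"
     "\<forall>k. j < k \<longrightarrow> k < i1 \<longrightarrow> Poly_Mapping.lookup s k = Poly_Mapping.lookup t k"
    and b: "i2 > j" "Poly_Mapping.lookup t i2 < Poly_Mapping.lookup u i2"
     "\<forall>k. j < k \<longrightarrow> k < i2 \<longrightarrow> Poly_Mapping.lookup t k = Poly_Mapping.lookup u k"
    unfolding Lj_def by blast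
  consider "i1 < i2" | "i1 = i2" | "i2 < i1" by linarith
  then show "Lj j s u"
  proof cases
    case 1 then show ?thesis unfolding Lj_def using a b by (intro exI[of _ i1]) auto
  next
    case 2 then show ?thesis unfolding Lj_def using a b by (intro exI[of _ i1]) auto
  next
    case 3 then show ?thesis unfolding Lj_def using a b by (intro exI[of _ i2]) auto
  qed
qed
lemma L_asym: "Lj j s t \<Longrightarrow> Lj j t s \<Longrightarrow> False"
  using L_trans L_not_H unfolding Hj_def by blast

lemma H_add: "Hj j (s + u) (t + u) \<longleftrightarrow> Hj j s t"
  unfolding Hj_def by (simp add: lookup_add)
lemma L_add: "Lj j (s + u) (t + u) \<longleftrightarrow> Lj j s t"
  unfolding Lj_def by (simp add: lookup_add)

lemma H_eq: "Hj j s t \<Longrightarrow> lowp j s = lowp j t \<Longrightarrow> s = t"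
  apply (rule poly_mapping_eqI)
  subgoal for i
    by (cases "i \<le> j") (auto simp: Hj_def dest!: arg_cong[where f="\<lambda>m. Poly_Mapping.lookup m i"] simp: lookup_lowp)
  done

lemma L_zero: "t \<noteq> 0 \<Longrightarrow> \<not> Hj j 0 t \<Longrightarrow> Lj j 0 t"
  using nonH[of j 0 t] unfolding Lj_def by auto

lemma H_sym: "Hj j s t \<Longrightarrow> Hj j t s"
  unfolding Hj_def by simp

lemma H_refl: "Hj j s s"
  unfolding Hj_def by simp

lemma elim_term_order:
  assumes "term_order j le"
  shows "term_order n (elim j le)"
proof -
  have R: "\<forall>s\<in>monoms_in j. le s s"
    and T: "\<forall>s\<in>monoms_in j. \<forall>t\<in>monoms_in j. \<forall>u\<in>monoms_in j. le s t \<longrightarrow> le t u \<longrightarrow> le s u"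
    and A: "\<forall>s\<in>monoms_in j. \<forall>t\<in>monoms_in j. le s t \<longrightarrow> le t s \<longrightarrow> s = t"
    and To: "\<forall>s\<in>monoms_in j. \<forall>t\<in>monoms_in j. le s t \<or> le t s"
    and Z: "\<forall>t\<in>monoms_in j. le 0 t"
    and M: "\<forall>s\<in>monoms_in j. \<forall>t\<in>monoms_in j. \<forall>u\<in>monoms_in j. le s t \<longrightarrow> le (s + u) (t + u)"
    using assms unfolding term_order_def by argo+
  have 1: "elim j le s s" if "s \<in> monoms_in n" for s
    unfolding elim_def
    by (intro disjI1 conjI H_refl R[rule_format, OF lowp_in[OF that]])
  have 2: "elim j le s u" if s: "s \<in> monoms_in n" and t: "t \<in> monoms_in n" and u: "u \<in> monoms_in n"
    and st: "elim j le s t" and tu: "elim j le t u" for s t u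
  proof -
    from st consider "Hj j s t" "le (lowp j s) (lowp j t)" | "Lj j s t" unfolding elim_def by iprover
    then show ?thesis
    proof cases
      case 1
      from tu consider "Hj j t u" "le (lowp j t) (lowp j u)" | "Lj j t u" unfolding elim_def by iprover
      then show ?thesis
      proof cases
        case 11: 1
        have "le (lowp j s) (lowp j u)"
          using T[rule_format, OF lowp_in[OF s] lowp_in[OF t] lowp_in[OF u] 1(2) 11(2)] .
        with H_trans[OF 1(1) 11(1)] show ?thesis unfolding elim_def by iprover
      next
        case 2
        with H_L[OF 1(1)] show ?thesis unfolding elim_def by iprover
      qed
    next
      case 2
      from tu consider "Hj j t u" | "Lj j t u" unfolding elim_def by iprover
      then show ?thesis
      proof cases
        case 1 with L_H[OF 2] show ?thesis unfolding elim_def by iprover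
      next
        case 22: 2 with L_trans[OF 2] show ?thesis unfolding elim_def by iprover
      qed
    qed
  qed
  have 3: "s = t" if s: "s \<in> monoms_in n" and t: "t \<in> monoms_in n"
    and st: "elim j le s t" and ts: "elim j le t s" for s t
  proof -
    from st consider "Hj j s t" "le (lowp j s) (lowp j t)" | "Lj j s t" unfolding elim_def by iprover
    then show ?thesis
    proof cases
      case 1
      from ts consider "Hj j t s" "le (lowp j t) (lowp j s)" | "Lj j t s" unfolding elim_def by iprover
      then show ?thesis
      proof cases
        case 11: 1
        have "lowp j s = lowp j t"
          using A[rule_format, OF lowp_in[OF s] lowp_in[OF t] 1(2) 11(2)] .
        with 1(1) show ?thesis by (rule H_eq)
      next
        case 2
        with L_not_H H_sym[OF 1(1)] show ?thesis by iprover
      qed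
    next
      case 2
      from ts consider "Hj j t s" | "Lj j t s" unfolding elim_def by iprover
      then show ?thesis
      proof cases
        case 1 with L_not_H[OF 2] H_sym show ?thesis by iprover
      next
        case 22: 2 with L_asym[OF 2] show ?thesis by iprover
      qed
    qed
  qed
  have 4: "elim j le s t \<or> elim j le t s" if s: "s \<in> monoms_in n" and t: "t \<in> monoms_in n" for s t
  proof (cases "Hj j s t")
    case True
    have "le (lowp j s) (lowp j t) \<or> le (lowp j t) (lowp j s)"
      using To[rule_format, OF lowp_in[OF s] lowp_in[OF t]] .
    with True H_sym[OF True] show ?thesis unfolding elim_def by iprover
  next
    case False
    from nonH[OF False] show ?thesis unfolding elim_def by iprover
  qed
  have 5: "elim j le 0 t" if t: "t \<in> monoms_in n" for t
  proof (cases "Hj j 0 t")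
    case True
    have "le 0 (lowp j t)" using Z[rule_format, OF lowp_in[OF t]] .
    then have "le (lowp j 0) (lowp j t)" by (simp only: lowp_zero)
    with True show ?thesis unfolding elim_def by iprover
  next
    case False
    then have "t \<noteq> 0" using H_refl by metis
    from L_zero[OF this False] show ?thesis unfolding elim_def by iprover
  qed
  have 6: "elim j le (s + u) (t + u)" if s: "s \<in> monoms_in n" and t: "t \<in> monoms_in n"
    and u: "u \<in> monoms_in n" and st: "elim j le s t" for s t u
  proof -
    from st consider "Hj j s t" "le (lowp j s) (lowp j t)" | "Lj j s t" unfolding elim_def by iprover
    then show ?thesis
    proof cases
      case 1
      have "le (lowp j s + lowp j u) (lowp j t + lowp j u)"
        using M[rule_format, OF lowp_in[OF s] lowp_in[OF t] lowp_in[OF u] 1(2)] .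
      then have "le (lowp j (s + u)) (lowp j (t + u))" by (simp only: lowp_add)
      moreover have "Hj j (s + u) (t + u)" using 1(1) by (simp only: H_add)
      ultimately show ?thesis unfolding elim_def by iprover
    next
      case 2
      then have "Lj j (s + u) (t + u)" by (simp only: L_add)
      then show ?thesis unfolding elim_def by iprover
    qed
  qed
  show ?thesis unfolding term_order_def
  proof (intro conjI)
    show "\<forall>s\<in>monoms_in n. elim j le s s" using 1 by (intro ballI)
  next
    show "\<forall>s\<in>monoms_in n. \<forall>t\<in>monoms_in n. \<forall>u\<in>monoms_in n. elim j le s t \<longrightarrow> elim j le t u \<longrightarrow> elim j le s u"
      using 2 by (intro ballI impI)
  next
    show "\<forall>s\<in>monoms_in n. \<forall>t\<in>monoms_in n. elim j le s t \<longrightarrow> elim j le t s \<longrightarrow> s = t"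
      using 3 by (intro ballI impI)
  next
    show "\<forall>s\<in>monoms_in n. \<forall>t\<in>monoms_in n. elim j le s t \<or> elim j le t s"
      using 4 by (intro ballI)
  next
    show "\<forall>t\<in>monoms_in n. elim j le 0 t" using 5 by (intro ballI)
  next
    show "\<forall>s\<in>monoms_in n. \<forall>t\<in>monoms_in n. \<forall>u\<in>monoms_in n. elim j le s t \<longrightarrow> elim j le (s + u) (t + u)"
      using 6 by (intro ballI impI)
  qed
qed

lemma max_exists:
  assumes to: "term_order n le" and fin: "finite A" and ne: "A \<noteq> {}" and sub: "A \<subseteq> monoms_in n"
  shows "\<exists>t\<in>A. \<forall>s\<in>A. le s t"
  using fin ne sub
proof (induction A rule: finite_ne_induct)
  case (singleton x)
  then have "x \<in> monoms_in n" by simp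
  with to have "le x x" unfolding term_order_def by blast
  then show ?case by simp
next
  case (insert x F)
  then have x: "x \<in> monoms_in n" and Fs: "F \<subseteq> monoms_in n" by simp_all
  from insert.IH[OF Fs] obtain t where t: "t \<in> F" "\<forall>s\<in>F. le s t" by blast
  have tn: "t \<in> monoms_in n" using t(1) Fs by blast
  have refl: "\<forall>s\<in>monoms_in n. le s s"
    and trans: "\<forall>s\<in>monoms_in n. \<forall>t\<in>monoms_in n. \<forall>u\<in>monoms_in n. le s t \<longrightarrow> le t u \<longrightarrow> le s u"
    and tot: "\<forall>s\<in>monoms_in n. \<forall>t\<in>monoms_in n. le s t \<or> le t s"
    using to unfolding term_order_def by blast+
  from tot x tn have "le x t \<or> le t x" by blast
  then show ?case
  proof
    assume "le x t"
    then show ?thesis using t by blast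
  next
    assume xt: "le t x"
    have "\<forall>s\<in>insert x F. le s x"
    proof
      fix s assume "s \<in> insert x F"
      then show "le s x"
      proof
        assume "s = x" then show ?thesis using refl x by blast
      next
        assume sF: "s \<in> F"
        then have "s \<in> monoms_in n" using Fs by blast
        moreover have "le s t" using sF t(2) by blast
        ultimately show ?thesis using trans tn x xt by blast
      qed
    qed
    then show ?thesis by blast
  qed
qed

lemma lead_monom_prop:
  assumes to: "term_order n le" and p: "p \<in> polys_in n" and nz: "p \<noteq> 0"
  shows "lead_monom le p \<in> Poly_Mapping.keys p \<and> (\<forall>s\<in>Poly_Mapping.keys p. le s (lead_monom le p))"
proof -
  have sub: "Poly_Mapping.keys p \<subseteq> monoms_in n" using p by (simp add: polys_in_def)
  have ne: "Poly_Mapping.keys p \<noteq> {}" using nz by simp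
  obtain t where t: "t \<in> Poly_Mapping.keys p" "\<forall>s\<in>Poly_Mapping.keys p. le s t"
    using max_exists[OF to finite_keys ne sub] by blast
  have antisym: "\<forall>s\<in>monoms_in n. \<forall>t\<in>monoms_in n. le s t \<longrightarrow> le t s \<longrightarrow> s = t"
    using to unfolding term_order_def by blast
  have "\<exists>!t. t \<in> Poly_Mapping.keys p \<and> (\<forall>s\<in>Poly_Mapping.keys p. le s t)"
  proof (rule ex1I[of _ t])
    show "t \<in> Poly_Mapping.keys p \<and> (\<forall>s\<in>Poly_Mapping.keys p. le s t)" using t by blast
  next
    fix u assume u: "u \<in> Poly_Mapping.keys p \<and> (\<forall>s\<in>Poly_Mapping.keys p. le s u)"
    then have "le u t" "le t u" using t by blast+
    moreover have "u \<in> monoms_in n" "t \<in> monoms_in n" using u t(1) sub by blast+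
    ultimately show "u = t" using antisym by blast
  qed
  then have "(THE t. t \<in> Poly_Mapping.keys p \<and> (\<forall>s\<in>Poly_Mapping.keys p. le s t))
       \<in> Poly_Mapping.keys p \<and> (\<forall>s\<in>Poly_Mapping.keys p. le s (THE t. t \<in> Poly_Mapping.keys p \<and> (\<forall>s\<in>Poly_Mapping.keys p. le s t)))"
    by (rule theI')
  then show ?thesis unfolding lead_monom_def .
qed

lemma lead_monom_cong:
  assumes "\<forall>s\<in>Poly_Mapping.keys p. \<forall>t\<in>Poly_Mapping.keys p. le1 s t = le2 s t"
  shows "lead_monom le1 p = lead_monom le2 p"
proof -
  have "(\<lambda>t. t \<in> Poly_Mapping.keys p \<and> (\<forall>s\<in>Poly_Mapping.keys p. le1 s t))
      = (\<lambda>t. t \<in> Poly_Mapping.keys p \<and> (\<forall>s\<in>Poly_Mapping.keys p. le2 s t))"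
  proof (rule ext)
    fix t show "(t \<in> Poly_Mapping.keys p \<and> (\<forall>s\<in>Poly_Mapping.keys p. le1 s t))
      = (t \<in> Poly_Mapping.keys p \<and> (\<forall>s\<in>Poly_Mapping.keys p. le2 s t))"
      using assms by blast
  qed
  then show ?thesis unfolding lead_monom_def by simp
qed

lemma monoms_in_high:
  assumes "s \<in> monoms_in j" "i > j" shows "Poly_Mapping.lookup s i = 0"
  using assms(1)[unfolded monoms_in_iff, rule_format] assms(2) by iprover

lemma elim_on_low:
  assumes "s \<in> monoms_in j" "t \<in> monoms_in j"
  shows "elim j le s t = le s t"
proof -
  have H: "Hj j s t" unfolding Hj_def
  proof (intro allI impI)
    fix i assume "i > j"
    then show "Poly_Mapping.lookup s i = Poly_Mapping.lookup t i"
      using monoms_in_high[OF assms(1)] monoms_in_high[OF assms(2)] by simp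
  qed
  have "\<not> Lj j s t" using L_not_H H by iprover
  with H show ?thesis unfolding elim_def using lowp_id[OF assms(1)] lowp_id[OF assms(2)] by simp
qed

lemma elim_low:
  assumes "elim j le s t" "t \<in> monoms_in j" "s \<in> monoms_in n"
  shows "s \<in> monoms_in j"
proof -
  have nL: "\<not> Lj j s t"
  proof
    assume "Lj j s t"
    then obtain i where "i > j" "Poly_Mapping.lookup s i < Poly_Mapping.lookup t i"
      unfolding Lj_def by iprover
    moreover have "Poly_Mapping.lookup t i = 0" using monoms_in_high[OF assms(2) \<open>i > j\<close>] .
    ultimately show False by simp
  qed
  then have H: "Hj j s t" using assms(1) unfolding elim_def by iprover
  show ?thesis unfolding monoms_in_iff
  proof (intro allI impI)
    fix i assume i: "i = 0 \<or> i > j"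
    show "Poly_Mapping.lookup s i = 0"
    proof (cases "i = 0")
      case True
      then have "i = 0 \<or> i > n" by iprover
      then show ?thesis using assms(3)[unfolded monoms_in_iff, rule_format] by iprover
    next
      case False
      then have "i > j" using i by iprover
      then have "Poly_Mapping.lookup s i = Poly_Mapping.lookup t i" using H unfolding Hj_def by iprover
      also have "\<dots> = 0" using monoms_in_high[OF assms(2) \<open>i > j\<close>] .
      finally show ?thesis .
    qed
  qed
qed


lemma dvd_low:
  assumes "monom_dvd s t" "t \<in> monoms_in j" shows "s \<in> monoms_in j"
  unfolding monoms_in_iff
proof (intro allI impI)
  fix i assume i: "i = 0 \<or> i > j"
  have "Poly_Mapping.lookup s i \<le> Poly_Mapping.lookup t i" using assms(1) unfolding monom_dvd_def by iprover
  moreover have "Poly_Mapping.lookup t i = 0" using assms(2)[unfolded monoms_in_iff, rule_format, OF i] .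
  ultimately show "Poly_Mapping.lookup s i = 0" by simp
qed

theorem proposition2p5:
  fixes F :: "'a::field mpoly set" and n j :: nat
  assumes "robust n F" and "j \<le> n"
  shows "robust j (F \<inter> polys_in j)"
proof -
  define Fj where "Fj = F \<inter> polys_in j"
  have Fn: "F \<subseteq> polys_in n" and gb: "\<And>le. term_order n le \<Longrightarrow> is_groebner n le F"
    and mg: "minimally_generates n F"
    using assms(1) unfolding robust_def by blast+
  have Fjj: "Fj \<subseteq> polys_in j" unfolding Fj_def by blast
  have "is_groebner j le Fj" if to: "term_order j le" for le
    unfolding is_groebner_def
  proof (intro ballI impI)
    fix p assume p: "p \<in> ideal_gen j Fj" and nz: "p \<noteq> 0"
    have pj: "p \<in> polys_in j" using ideal_gen_polys[OF Fjj p] .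
    have pn: "p \<in> polys_in n" using pj polys_in_mono[OF assms(2)] by blast
    have "\<forall>g\<in>Fj. g \<in> ideal_gen n F" unfolding Fj_def using ideal_gen.gen by blast
    from ideal_gen_sub[OF assms(2) this p] have pI: "p \<in> ideal_gen n F" .
    define le' where "le' = elim j le"
    have to': "term_order n le'" unfolding le'_def by (rule elim_term_order[OF to])
    from gb[OF to'] pI nz obtain g where g: "g \<in> F" "g \<noteq> 0"
      and dv: "monom_dvd (lead_monom le' g) (lead_monom le' p)"
      unfolding is_groebner_def by blast
    have gn: "g \<in> polys_in n" using g(1) Fn by blast
    have lp: "lead_monom le' p \<in> Poly_Mapping.keys p" using lead_monom_prop[OF to' pn nz] by blast
    have lpj: "lead_monom le' p \<in> monoms_in j" using lp pj unfolding polys_in_def by blast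
    have lgj: "lead_monom le' g \<in> monoms_in j" using dvd_low[OF dv lpj] .
    have lg: "\<forall>s\<in>Poly_Mapping.keys g. le' s (lead_monom le' g)"
      using lead_monom_prop[OF to' gn g(2)] by blast
    have kgn: "Poly_Mapping.keys g \<subseteq> monoms_in n" using gn unfolding polys_in_def by blast
    have "Poly_Mapping.keys g \<subseteq> monoms_in j"
    proof
      fix s assume s: "s \<in> Poly_Mapping.keys g"
      have "elim j le s (lead_monom le' g)" using lg s unfolding le'_def by blast
      moreover have "s \<in> monoms_in n" using s kgn by blast
      ultimately show "s \<in> monoms_in j" using elim_low lgj by blast
    qed
    then have gj: "g \<in> polys_in j" unfolding polys_in_def by blast
    have kpj: "Poly_Mapping.keys p \<subseteq> monoms_in j" using pj unfolding polys_in_def by blast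
    note kgj = \<open>Poly_Mapping.keys g \<subseteq> monoms_in j\<close>
    have e1: "lead_monom le' g = lead_monom le g"
      unfolding le'_def
    proof (rule lead_monom_cong, intro ballI)
      fix s t assume s: "s \<in> Poly_Mapping.keys g" and t: "t \<in> Poly_Mapping.keys g"
      show "elim j le s t = le s t" by (rule elim_on_low[OF subsetD[OF kgj s] subsetD[OF kgj t]])
    qed
    have e2: "lead_monom le' p = lead_monom le p"
      unfolding le'_def
    proof (rule lead_monom_cong, intro ballI)
      fix s t assume s: "s \<in> Poly_Mapping.keys p" and t: "t \<in> Poly_Mapping.keys p"
      show "elim j le s t = le s t" by (rule elim_on_low[OF subsetD[OF kpj s] subsetD[OF kpj t]])
    qed
    have "g \<in> Fj" unfolding Fj_def using g(1) gj by blast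
    moreover have "monom_dvd (lead_monom le g) (lead_monom le p)" using dv e1 e2 by simp
    ultimately show "\<exists>g\<in>Fj. g \<noteq> 0 \<and> monom_dvd (lead_monom le g) (lead_monom le p)"
      using g(2) by blast
  qed
  moreover have "minimally_generates j Fj"
    unfolding minimally_generates_def
  proof (intro ballI notI)
    fix f assume f: "f \<in> Fj" and eq: "ideal_gen j (Fj - {f}) = ideal_gen j Fj"
    have fF: "f \<in> F" using f unfolding Fj_def by blast
    have "f \<in> ideal_gen j Fj" using f by (rule ideal_gen.gen)
    then have fj: "f \<in> ideal_gen j (Fj - {f})" using eq by simp
    have "\<forall>g\<in>Fj - {f}. g \<in> ideal_gen n (F - {f})"
    proof
      fix g assume "g \<in> Fj - {f}"
      then have "g \<in> F - {f}" unfolding Fj_def by blast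
      then show "g \<in> ideal_gen n (F - {f})" by (rule ideal_gen.gen)
    qed
    from ideal_gen_sub[OF assms(2) this fj] have fI: "f \<in> ideal_gen n (F - {f})" .
    have all: "\<forall>g\<in>F. g \<in> ideal_gen n (F - {f})"
    proof
      fix g assume "g \<in> F"
      show "g \<in> ideal_gen n (F - {f})"
      proof (cases "g = f")
        case True then show ?thesis using fI by simp
      next
        case False then have "g \<in> F - {f}" using \<open>g \<in> F\<close> by blast
        then show ?thesis by (rule ideal_gen.gen)
      qed
    qed
    have "ideal_gen n F \<subseteq> ideal_gen n (F - {f})"
      using ideal_gen_sub[OF order_refl all] by blast
    moreover have "\<forall>g\<in>F - {f}. g \<in> ideal_gen n F" using ideal_gen.gen by blast
    then have "ideal_gen n (F - {f}) \<subseteq> ideal_gen n F"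
      using ideal_gen_sub[OF order_refl] by blast
    ultimately have "ideal_gen n (F - {f}) = ideal_gen n F" by blast
    with mg fF show False unfolding minimally_generates_def by blast
  qed
  ultimately show ?thesis unfolding robust_def Fj_def[symmetric] using Fjj by blast
qed

end
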